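(* Let $S\subset\mathbb{R}^3$ be a compact convex solid of volume $V>0$ that is centrally symmetric with respect to a point $C$ (i.e. for every $P\in S$ the point $P'$ with $\overrightarrow{CP}+\overrightarrow{CP'}=0$ also lies in $S$). Suppose $S$ is contained in the half-space $\{z\ge 0\}$ and touches the plane $z=0$ (the orifice is at the bottom of the solid, located in the $xy$-plane), and let $h_C>0$ be the $z$-coordinate (altitude) of $C$. Let $K>0$ be a constant and define the drainage time $$T=\frac{1}{K}\iiint_S \frac{1}{\sqrt{z}}\,dx\,dy\,dz .$$ Then $$\frac{V}{K\sqrt{h_C}}\le T\le \frac{\sqrt{2}\,V}{K\sqrt{h_C}}.$$
   Context: This $T$ is the total drainage time given by Torricelli's law $A(h)\,h'(t)=-ka\sqrt{2gh}$ for a container of shape $S$ with a small hole at its lowest point, where $A(h)$ is the area of the horizontal cross-section of $S$ at height $h$ and $K=ka\sqrt{2g}$; equivalently $T=\frac1K\int_0^H A(h)h^{-1/2}\,dh$, with $H$ the height of $S$. *)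

theory Defs
  imports "HOL-Analysis.Analysis"
begin

definition drainage_time :: "real \<Rightarrow> (real^3) set \<Rightarrow> real" where
  "drainage_time K S = (1 / K) * integral S (\<lambda>p. 1 / sqrt (p $ 3))"

end

theory Submission
  imports Defs
begin

lemma interval_fill:
  fixes I :: "real set"
  assumes "is_interval I" "bounded I" "I \<noteq> {}" "0 < \<theta>" "\<theta> < 1"
  shows "Inf I + \<theta> * (Sup I - Inf I) \<in> I"
proof -
  have bb: "bdd_below I" "bdd_above I" using assms(2) bounded_imp_bdd_below bounded_imp_bdd_above by auto
  define p where "p = Inf I"
  define q where "q = Sup I"
  have pq: "\<forall>x\<in>I. p \<le> x \<and> x \<le> q" using bb by (auto simp: p_def q_def intro: cInf_lower cSup_upper)
  show ?thesis
  proof (cases "p = q")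
    case True
    then obtain x where "x \<in> I" using assms by auto
    with pq True have "x = p" by force
    then show ?thesis using True \<open>x \<in> I\<close> by (simp add: p_def[symmetric] q_def[symmetric])
  next
    case False
    then have "p < q" using pq assms(3) by force
    define t where "t = p + \<theta> * (q - p)"
    have "\<theta> * (q - p) < q - p" using mult_strict_right_mono[of \<theta> 1 "q-p"] \<open>p < q\<close> assms(5) by simp
    moreover have "0 < \<theta> * (q - p)" using \<open>p < q\<close> assms(4) by simp
    ultimately have "p < t" "t < q" unfolding t_def by linarith+
    then obtain x where x: "x \<in> I" "x < t" using cInf_less_iff[OF assms(3) bb(1)] p_def by auto
    obtain y where y: "y \<in> I" "t < y" using less_cSup_iff[OF assms(3) bb(2)] \<open>t < q\<close> q_def by auto
    have "t \<in> I" using assms(1) x y unfolding is_interval_1 by (meson less_imp_le)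
    then show ?thesis by (simp add: t_def p_def q_def)
  qed
qed

lemma interval_emeasure_le:
  fixes I :: "real set"
  assumes "bounded I" "I \<noteq> {}"
  shows "emeasure lborel I \<le> ennreal (Sup I - Inf I)"
proof -
  have bb: "bdd_below I" "bdd_above I" using assms(1) bounded_imp_bdd_below bounded_imp_bdd_above by auto
  have "I \<subseteq> {Inf I .. Sup I}" using bb by (auto intro: cInf_lower cSup_upper)
  then have "emeasure lborel I \<le> emeasure lborel {Inf I .. Sup I}" by (intro emeasure_mono) auto
  also have "\<dots> = ennreal (Sup I - Inf I)"
    using cInf_le_cSup[OF assms(2) bb(2) bb(1)] by simp
  finally show ?thesis .
qed

lemma BM1:
  fixes I J N :: "real set"
  assumes I: "is_interval I" "bounded I" "I \<noteq> {}"
    and J: "is_interval J" "bounded J" "J \<noteq> {}"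
    and N: "N \<in> sets lborel" and s: "0 \<le> s" "s \<le> 1"
    and comb: "\<And>x y. x \<in> I \<Longrightarrow> y \<in> J \<Longrightarrow> s * x + (1 - s) * y \<in> N"
  shows "ennreal (s * (Sup I - Inf I) + (1 - s) * (Sup J - Inf J)) \<le> emeasure lborel N"
proof -
  have bI: "bdd_below I" "bdd_above I" using I(2) bounded_imp_bdd_below bounded_imp_bdd_above by auto
  have bJ: "bdd_below J" "bdd_above J" using J(2) bounded_imp_bdd_below bounded_imp_bdd_above by auto
  have i: "Inf I \<le> Sup I" using cInf_le_cSup[OF I(3) bI(2) bI(1)] .
  have j: "Inf J \<le> Sup J" using cInf_le_cSup[OF J(3) bJ(2) bJ(1)] .
  define L where "L = s * Inf I + (1 - s) * Inf J"
  define U where "U = s * Sup I + (1 - s) * Sup J"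
  have UL: "U - L = s * (Sup I - Inf I) + (1 - s) * (Sup J - Inf J)" by (simp add: L_def U_def algebra_simps)
  have sub: "{L<..<U} \<subseteq> N"
  proof
    fix t assume t: "t \<in> {L<..<U}"
    define \<theta> where "\<theta> = (t - L) / (U - L)"
    have "0 < \<theta>" "\<theta> < 1" using t by (auto simp: \<theta>_def field_simps)
    define x where "x = Inf I + \<theta> * (Sup I - Inf I)"
    define y where "y = Inf J + \<theta> * (Sup J - Inf J)"
    have "x \<in> I" unfolding x_def by (rule interval_fill) (use I \<open>0 < \<theta>\<close> \<open>\<theta> < 1\<close> in auto)
    moreover have "y \<in> J" unfolding y_def by (rule interval_fill) (use J \<open>0 < \<theta>\<close> \<open>\<theta> < 1\<close> in auto)
    moreover have "s * x + (1 - s) * y = L + \<theta> * (U - L)"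
      by (simp add: x_def y_def L_def U_def algebra_simps)
    moreover have "L + \<theta> * (U - L) = t" using t by (simp add: \<theta>_def)
    ultimately show "t \<in> N" using comb by metis
  qed
  have "U - L \<ge> 0" using UL i j s by simp
  then have "ennreal (U - L) = emeasure lborel {L<..<U}" by simp
  also have "\<dots> \<le> emeasure lborel N" using sub N by (intro emeasure_mono) auto
  finally show ?thesis using UL by simp
qed

lemma BM1_refl:
  fixes I N :: "real set"
  assumes I: "is_interval I" "bounded I" "I \<noteq> {}"
    and N: "N \<in> sets lborel" and s: "0 \<le> s" "s \<le> 1"
    and comb: "\<And>x y. x \<in> I \<Longrightarrow> y \<in> I \<Longrightarrow> s * x + (1 - s) * (a - y) \<in> N"
  shows "emeasure lborel I \<le> emeasure lborel N"
proof -
  have bI: "bdd_below I" "bdd_above I" using I(2) bounded_imp_bdd_below bounded_imp_bdd_above by auto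
  have i: "Inf I \<le> Sup I" using cInf_le_cSup[OF I(3) bI(2) bI(1)] .
  define p where "p = Inf I"
  define q where "q = Sup I"
  define L where "L = s * p + (1 - s) * (a - q)"
  define U where "U = s * q + (1 - s) * (a - p)"
  have UL: "U - L = q - p" by (simp add: L_def U_def algebra_simps)
  have sub: "{L<..<U} \<subseteq> N"
  proof
    fix t assume t: "t \<in> {L<..<U}"
    define \<theta> where "\<theta> = (t - L) / (U - L)"
    have "0 < \<theta>" "\<theta> < 1" using t by (auto simp: \<theta>_def field_simps)
    define x where "x = p + \<theta> * (q - p)"
    define y where "y = p + (1 - \<theta>) * (q - p)"
    have "x \<in> I" unfolding x_def p_def q_def by (rule interval_fill) (use I \<open>0 < \<theta>\<close> \<open>\<theta> < 1\<close> in auto)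
    moreover have "y \<in> I" unfolding y_def p_def q_def by (rule interval_fill) (use I \<open>0 < \<theta>\<close> \<open>\<theta> < 1\<close> in auto)
    moreover have "s * x + (1 - s) * (a - y) = L + \<theta> * (U - L)"
      by (simp add: x_def y_def L_def U_def algebra_simps)
    moreover have "L + \<theta> * (U - L) = t" using t by (simp add: \<theta>_def)
    ultimately show "t \<in> N" using comb by metis
  qed
  have "emeasure lborel I \<le> ennreal (q - p)" using interval_emeasure_le[OF I(2,3)] by (simp add: p_def q_def)
  also have "\<dots> = emeasure lborel {L<..<U}" using UL i by (simp add: p_def q_def)
  also have "\<dots> \<le> emeasure lborel N" using sub N by (intro emeasure_mono) auto
  finally show ?thesis .
qed


lemma comb_gt:
  fixes r a b s :: real
  assumes "r < a" "r < b" "0 \<le> s" "s \<le> 1"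
  shows "r < s * a + (1 - s) * b"
proof (cases "s = 0")
  case True then show ?thesis using assms by simp
next
  case False
  then have "s * r < s * a" using assms by simp
  moreover have "(1 - s) * r \<le> (1 - s) * b" using assms by (intro mult_left_mono) auto
  ultimately show ?thesis by (simp add: algebra_simps)
qed

lemma layer_cake:
  fixes g :: "real \<Rightarrow> real"
  assumes [measurable]: "g \<in> borel_measurable borel" and nn: "\<And>y. 0 \<le> g y"
  shows "(\<integral>\<^sup>+y. ennreal (g y) \<partial>lborel) = (\<integral>\<^sup>+r. indicator {0..} r * emeasure lborel {y. r < g y} \<partial>lborel)"
proof -
  let ?G = "\<lambda>y r. indicator {p::real\<times>real. 0 \<le> snd p \<and> snd p < g (fst p)} (y, r) :: ennreal"
  have meas: "(\<lambda>(y, r). ?G y r) \<in> borel_measurable (lborel \<Otimes>\<^sub>M lborel)"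
    by measurable
  have "(\<integral>\<^sup>+y. ennreal (g y) \<partial>lborel) = (\<integral>\<^sup>+y. (\<integral>\<^sup>+r. ?G y r \<partial>lborel) \<partial>lborel)"
  proof (intro nn_integral_cong)
    fix y
    have "(\<integral>\<^sup>+r. ?G y r \<partial>lborel) = (\<integral>\<^sup>+r. indicator {0..<g y} r \<partial>lborel)"
      by (intro nn_integral_cong) (auto simp: indicator_def)
    also have "\<dots> = ennreal (g y)" using nn[of y] by simp
    finally show "ennreal (g y) = (\<integral>\<^sup>+r. ?G y r \<partial>lborel)" by simp
  qed
  also have "\<dots> = (\<integral>\<^sup>+r. (\<integral>\<^sup>+y. ?G y r \<partial>lborel) \<partial>lborel)"
    using lborel_pair.Fubini'[OF meas] by simp
  also have "\<dots> = (\<integral>\<^sup>+r. indicator {0..} r * emeasure lborel {y. r < g y} \<partial>lborel)"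
  proof (intro nn_integral_cong)
    fix r :: real
    show "(\<integral>\<^sup>+y. ?G y r \<partial>lborel) = indicator {0..} r * emeasure lborel {y. r < g y}"
    proof (cases "0 \<le> r")
      case True
      have "(\<integral>\<^sup>+y. ?G y r \<partial>lborel) = (\<integral>\<^sup>+y. indicator {y. r < g y} y \<partial>lborel)"
        using True by (intro nn_integral_cong) (auto simp: indicator_def)
      also have "\<dots> = emeasure lborel {y. r < g y}" by (intro nn_integral_indicator) measurable
      finally show ?thesis using True by simp
    next
      case False
      then show ?thesis by (simp add: indicator_def)
    qed
  qed
  finally show ?thesis .
qed

lemma sets_lborel_pair: "sets (lborel \<Otimes>\<^sub>M lborel :: ('a::euclidean_space \<times> 'b::euclidean_space) measure) = sets borel"
  by (metis lborel_prod sets_lborel)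

lemma area_fib:
  fixes K :: "('a::euclidean_space \<times> 'b::euclidean_space) set"
  assumes "K \<in> sets borel"
  shows "emeasure lborel K = (\<integral>\<^sup>+y. emeasure lborel (Pair y -` K) \<partial>lborel)"
proof -
  have "emeasure lborel K = emeasure (lborel \<Otimes>\<^sub>M lborel) K" by (simp add: lborel_prod)
  also have "\<dots> = (\<integral>\<^sup>+y. emeasure lborel (Pair y -` K) \<partial>lborel)"
    by (rule lborel.emeasure_pair_measure_alt) (use assms sets_lborel_pair in auto)
  finally show ?thesis .
qed

lemma compact_fib:
  fixes K :: "('a::euclidean_space \<times> 'b::euclidean_space) set"
  assumes "compact K"
  shows "compact (Pair y -` K)"
proof -
  have eq: "Pair y -` K = snd ` (K \<inter> ({y} \<times> UNIV))"
  proof (intro set_eqI iffI)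
    fix x assume "x \<in> Pair y -` K"
    then show "x \<in> snd ` (K \<inter> ({y} \<times> UNIV))" by (intro image_eqI[where x="(y, x)"]) auto
  qed auto
  have "compact (K \<inter> ({y} \<times> UNIV))"
    using assms by (intro compact_Int_closed closed_Times) auto
  then have "compact (snd ` (K \<inter> ({y} \<times> UNIV)))"
    by (intro compact_continuous_image continuous_on_snd continuous_on_id)
  then show ?thesis using eq by simp
qed

lemma meas_fib:
  fixes K :: "('a::euclidean_space \<times> 'b::euclidean_space) set"
  assumes "K \<in> sets borel"
  shows "(\<lambda>y. emeasure lborel (Pair y -` K)) \<in> borel_measurable borel"
    "(\<lambda>y. measure lborel (Pair y -` K)) \<in> borel_measurable borel"
proof -
  show 1: "(\<lambda>y. emeasure lborel (Pair y -` K)) \<in> borel_measurable borel"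
    using lborel.measurable_emeasure_Pair[of K lborel] assms sets_lborel_pair by simp
  show "(\<lambda>y. measure lborel (Pair y -` K)) \<in> borel_measurable borel"
    unfolding measure_def using 1 by measurable
qed

lemma emeasure_fib_compact:
  fixes K :: "('a::euclidean_space \<times> 'b::euclidean_space) set"
  assumes "compact K"
  shows "emeasure lborel (Pair y -` K) = ennreal (measure lborel (Pair y -` K))"
  using emeasure_compact_finite[OF compact_fib[OF assms, of y]] by (intro emeasure_eq_ennreal_measure) (simp add: less_top)

lemma interval_fib:
  fixes K :: "(real \<times> real) set"
  assumes "convex K"
  shows "is_interval (Pair y -` K)"
  unfolding is_interval_convex_1 convex_alt
proof (intro ballI allI impI)
  fix x1 x2 and u :: real assume x: "x1 \<in> Pair y -` K" "x2 \<in> Pair y -` K" and u: "0 \<le> u \<and> u \<le> 1"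
  have x': "(y, x1) \<in> K" "(y, x2) \<in> K" using x by auto
  have "(1 - u) *\<^sub>R (y, x1) + u *\<^sub>R (y, x2) \<in> K"
    using assms x' u unfolding convex_alt by blast
  moreover have "(1 - u) *\<^sub>R (y, x1) + u *\<^sub>R (y, x2) = (y, (1 - u) *\<^sub>R x1 + u *\<^sub>R x2)"
    by (simp add: algebra_simps)
  ultimately show "(1 - u) *\<^sub>R x1 + u *\<^sub>R x2 \<in> Pair y -` K" by simp
qed

lemma measure_le_width:
  fixes I :: "real set"
  assumes "compact I" "I \<noteq> {}"
  shows "measure lborel I \<le> Sup I - Inf I"
proof -
  have bb: "bdd_below I" "bdd_above I" using compact_imp_bounded[OF assms(1)] bounded_imp_bdd_below bounded_imp_bdd_above by auto
  have "Inf I \<le> Sup I" using cInf_le_cSup[OF assms(2) bb(2) bb(1)] .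
  moreover have "emeasure lborel I \<le> ennreal (Sup I - Inf I)"
    using interval_emeasure_le[OF compact_imp_bounded[OF assms(1)] assms(2)] .
  moreover have "emeasure lborel I = ennreal (measure lborel I)"
    using emeasure_compact_finite[OF assms(1)] by (intro emeasure_eq_ennreal_measure) (simp add: less_top)
  ultimately show ?thesis by (metis diff_ge_0_iff_ge ennreal_le_iff)
qed

lemma fib_concave:
  fixes K L M :: "(real \<times> real) set"
  assumes K: "compact K" "convex K" and L: "compact L" "convex L" and M: "compact M"
    and s: "0 \<le> s" "s \<le> 1"
    and comb: "\<And>p q. p \<in> K \<Longrightarrow> q \<in> L \<Longrightarrow> s *\<^sub>R p + (1 - s) *\<^sub>R q \<in> M"
    and ne: "Pair y1 -` K \<noteq> {}" "Pair y2 -` L \<noteq> {}"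
  shows "s * measure lborel (Pair y1 -` K) + (1 - s) * measure lborel (Pair y2 -` L)
     \<le> measure lborel (Pair (s * y1 + (1 - s) * y2) -` M)"
proof -
  let ?I = "Pair y1 -` K" and ?J = "Pair y2 -` L" and ?N = "Pair (s * y1 + (1 - s) * y2) -` M"
  have cI: "compact ?I" and cJ: "compact ?J" and cN: "compact ?N" using K L M compact_fib by auto
  have "ennreal (s * (Sup ?I - Inf ?I) + (1 - s) * (Sup ?J - Inf ?J)) \<le> emeasure lborel ?N"
  proof (rule BM1)
    show "is_interval ?I" "is_interval ?J" using interval_fib K L by auto
    show "bounded ?I" "bounded ?J" using cI cJ compact_imp_bounded by auto
    show "?N \<in> sets lborel" using cN by (simp add: borel_compact)
    fix x y assume "x \<in> ?I" "y \<in> ?J"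
    then have "s *\<^sub>R (y1, x) + (1 - s) *\<^sub>R (y2, y) \<in> M" using comb by auto
    then show "s * x + (1 - s) * y \<in> ?N" by simp
  qed (use ne s in auto)
  moreover have "emeasure lborel ?N = ennreal (measure lborel ?N)"
    using emeasure_compact_finite[OF cN] by (intro emeasure_eq_ennreal_measure) (simp add: less_top)
  ultimately have "s * (Sup ?I - Inf ?I) + (1 - s) * (Sup ?J - Inf ?J) \<le> measure lborel ?N"
    by (metis ennreal_le_iff measure_nonneg)
  moreover have "s * measure lborel ?I \<le> s * (Sup ?I - Inf ?I)"
    using measure_le_width[OF cI ne(1)] s by (intro mult_left_mono) auto
  moreover have "(1 - s) * measure lborel ?J \<le> (1 - s) * (Sup ?J - Inf ?J)"
    using measure_le_width[OF cJ ne(2)] s by (intro mult_left_mono) auto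
  ultimately show ?thesis by linarith
qed

lemma emeasure_reflect_real:
  fixes F :: "real set"
  assumes "F \<in> sets borel"
  shows "emeasure lborel ((\<lambda>x. b - x) ` F) = emeasure lborel F"
proof -
  have img: "(\<lambda>x. b - x) ` F = {x. b + (-1) * x \<in> F}"
  proof (intro set_eqI iffI)
    fix x assume "x \<in> (\<lambda>x. b - x) ` F" then show "x \<in> {x. b + (-1) * x \<in> F}" by auto
  next
    fix x assume "x \<in> {x. b + (-1) * x \<in> F}"
    then show "x \<in> (\<lambda>x. b - x) ` F" by (intro image_eqI[where x="b - x"]) auto
  qed
  have "emeasure lborel F = (\<integral>\<^sup>+x. indicator F x \<partial>lborel)" using assms by simp
  also have "\<dots> = ennreal \<bar>-1\<bar> * (\<integral>\<^sup>+x. indicator F (b + (-1) * x) \<partial>lborel)"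
    by (rule nn_integral_real_affine) (use assms in auto)
  also have "\<dots> = (\<integral>\<^sup>+x. indicator {x. b + (-1) * x \<in> F} x \<partial>lborel)"
    by (simp add: indicator_def)
  also have "\<dots> = emeasure lborel {x. b + (-1) * x \<in> F}"
    by (intro nn_integral_indicator) (use assms in measurable)
  finally show ?thesis using img by simp
qed


lemma lborel_reflect:
  fixes t :: "'a::euclidean_space"
  shows "distr lborel borel (\<lambda>x. t - x) = (lborel :: 'a measure)"
proof -
  have "lborel = density (distr lborel borel (\<lambda>x. t + (-1) *\<^sub>R x)) (\<lambda>_. \<bar>-1::real\<bar>^DIM('a))"
    by (rule lborel_affine) simp
  also have "(\<lambda>x. t + (-1) *\<^sub>R x) = (\<lambda>x. t - x)" by auto
  finally show ?thesis by (simp add: density_1)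
qed

lemma emeasure_reflect:
  fixes F :: "'a::euclidean_space set"
  assumes "F \<in> sets borel"
  shows "emeasure lborel ((\<lambda>x. b - x) ` F) = emeasure lborel F"
proof -
  have img: "(\<lambda>x. b - x) ` F = (\<lambda>x. b - x) -` F"
  proof (intro set_eqI iffI)
    fix x assume "x \<in> (\<lambda>x. b - x) -` F"
    then show "x \<in> (\<lambda>x. b - x) ` F" by (intro image_eqI[where x="b - x"]) auto
  qed auto
  have "emeasure lborel F = emeasure (distr lborel borel (\<lambda>x. b - x)) F"
    by (simp add: lborel_reflect)
  also have "\<dots> = emeasure lborel ((\<lambda>x. b - x) -` F \<inter> space lborel)"
    by (rule emeasure_distr) (use assms in auto)
  finally show ?thesis using img by simp
qed

lemma convex_fib:
  fixes K :: "('a::real_vector \<times> 'b::real_vector) set"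
  assumes "convex K"
  shows "convex (Pair y -` K)"
  unfolding convex_alt
proof (intro ballI allI impI)
  fix x1 x2 and u :: real assume x: "x1 \<in> Pair y -` K" "x2 \<in> Pair y -` K" and u: "0 \<le> u \<and> u \<le> 1"
  have x': "(y, x1) \<in> K" "(y, x2) \<in> K" using x by auto
  have "(1 - u) *\<^sub>R (y, x1) + u *\<^sub>R (y, x2) \<in> K"
    using assms x' u unfolding convex_alt by blast
  moreover have "(1 - u) *\<^sub>R y + u *\<^sub>R y = y" by (simp add: algebra_simps)
  ultimately show "(1 - u) *\<^sub>R x1 + u *\<^sub>R x2 \<in> Pair y -` K" by simp
qed

lemma fib_ne:
  fixes K :: "('a::euclidean_space \<times> 'b::euclidean_space) set"
  assumes "r < measure lborel (Pair y -` K)" "0 \<le> r"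
  shows "Pair y -` K \<noteq> {}"
  using assms by auto

lemma BM2:
  fixes K M :: "(real \<times> real) set" and a :: "real \<times> real"
  assumes K: "compact K" "convex K" and M: "compact M" and s: "0 \<le> s" "s \<le> 1"
    and comb: "\<And>p q. p \<in> K \<Longrightarrow> q \<in> K \<Longrightarrow> s *\<^sub>R p + (1 - s) *\<^sub>R (a - q) \<in> M"
  shows "emeasure lborel K \<le> emeasure lborel M"
proof -
  define L where "L = (\<lambda>q. a - q) ` K"
  have L_eq: "L = (\<lambda>q. a + (-1) *\<^sub>R q) ` K" unfolding L_def by simp
  have cL: "compact L" unfolding L_def by (intro compact_continuous_image continuous_intros K)
  have vL: "convex L" unfolding L_eq by (rule convex_affinity) (rule K(2))
  have combL: "\<And>p q. p \<in> K \<Longrightarrow> q \<in> L \<Longrightarrow> s *\<^sub>R p + (1 - s) *\<^sub>R q \<in> M"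
    using comb unfolding L_def by auto
  define lamK where "lamK y = measure lborel (Pair y -` K)" for y
  define lamM where "lamM y = measure lborel (Pair y -` M)" for y
  have [measurable]: "lamK \<in> borel_measurable borel" "lamM \<in> borel_measurable borel"
    unfolding lamK_def lamM_def using meas_fib(2) K(1) M borel_compact by blast+
  have memL: "(y, x) \<in> L \<longleftrightarrow> (fst a - y, snd a - x) \<in> K" for y x
  proof
    assume "(y, x) \<in> L"
    then obtain q where "q \<in> K" "(y, x) = a - q" unfolding L_def by auto
    moreover then have "q = (fst a - y, snd a - x)" by (cases q, cases a) auto
    ultimately show "(fst a - y, snd a - x) \<in> K" by simp
  next
    assume "(fst a - y, snd a - x) \<in> K"
    moreover have "(y, x) = a - (fst a - y, snd a - x)" by (cases a) auto
    ultimately show "(y, x) \<in> L" unfolding L_def by blast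
  qed
  have fibL: "Pair y -` L = (\<lambda>x. snd a - x) ` (Pair (fst a - y) -` K)" for y
  proof (intro set_eqI iffI)
    fix x assume "x \<in> Pair y -` L"
    then have "snd a - x \<in> Pair (fst a - y) -` K" using memL by simp
    then show "x \<in> (\<lambda>x. snd a - x) ` (Pair (fst a - y) -` K)"
      by (intro image_eqI[where x="snd a - x"]) auto
  next
    fix x assume "x \<in> (\<lambda>x. snd a - x) ` (Pair (fst a - y) -` K)"
    then show "x \<in> Pair y -` L" using memL by auto
  qed
  have lamL: "measure lborel (Pair y -` L) = lamK (fst a - y)" for y
    unfolding lamK_def measure_def fibL
    by (subst emeasure_reflect) (use compact_fib[OF K(1)] borel_compact in auto)
  have areaK: "emeasure lborel K = (\<integral>\<^sup>+y. ennreal (lamK y) \<partial>lborel)"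
    unfolding lamK_def using area_fib[of K] borel_compact[OF K(1)] emeasure_fib_compact[OF K(1)] by simp
  have areaM: "emeasure lborel M = (\<integral>\<^sup>+y. ennreal (lamM y) \<partial>lborel)"
    unfolding lamM_def using area_fib[of M] borel_compact[OF M] emeasure_fib_compact[OF M] by simp
  have bK: "bounded (fst ` K)"
    by (intro compact_imp_bounded compact_continuous_image continuous_intros K)
  have key: "emeasure lborel {y. r < lamK y} \<le> emeasure lborel {y. r < lamM y}" if r: "0 \<le> r" for r
  proof (cases "{y. r < lamK y} = {}")
    case True then show ?thesis by simp
  next
    case False
    show ?thesis
    proof (rule BM1_refl[where a="fst a" and s=s])
      show "is_interval {y. r < lamK y}" unfolding is_interval_1
      proof (intro ballI allI impI)
        fix y1 y2 t assume y: "y1 \<in> {y. r < lamK y}" "y2 \<in> {y. r < lamK y}" and t: "y1 \<le> t \<and> t \<le> y2"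
        show "t \<in> {y. r < lamK y}"
        proof (cases "y1 = y2")
          case True then show ?thesis using y t by auto
        next
          case False
          then have lt: "y1 < y2" using t by auto
          define u where "u = (y2 - t) / (y2 - y1)"
          have u: "0 \<le> u" "u \<le> 1" using t lt by (auto simp: u_def field_simps)
          have "u * (y2 - y1) = y2 - t" using lt by (simp add: u_def)
          moreover have "u * y1 + (1 - u) * y2 = y2 - u * (y2 - y1)" by (simp add: algebra_simps)
          ultimately have tu: "u * y1 + (1 - u) * y2 = t" by simp
          have "u * lamK y1 + (1 - u) * lamK y2 \<le> lamK (u * y1 + (1 - u) * y2)"
            unfolding lamK_def
          proof (rule fib_concave[OF K K K(1) u])
            show "\<And>p q. p \<in> K \<Longrightarrow> q \<in> K \<Longrightarrow> u *\<^sub>R p + (1 - u) *\<^sub>R q \<in> K"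
              using K(2) u by (intro convexD) auto
            show "Pair y1 -` K \<noteq> {}" "Pair y2 -` K \<noteq> {}"
              using y r fib_ne unfolding lamK_def by auto
          qed
          moreover have "r < u * lamK y1 + (1 - u) * lamK y2" using y u by (intro comb_gt) auto
          ultimately show ?thesis using tu by auto
        qed
      qed
      show "bounded {y. r < lamK y}"
      proof (rule bounded_subset[OF bK], safe)
        fix y assume "r < lamK y"
        then have "Pair y -` K \<noteq> {}" using fib_ne r unfolding lamK_def by blast
        then obtain x where "(y, x) \<in> K" by auto
        then show "y \<in> fst ` K" by force
      qed
      show "{y. r < lamK y} \<noteq> {}" by fact
      show "{y. r < lamM y} \<in> sets lborel" by measurable
      show "0 \<le> s" "s \<le> 1" by fact+
      fix y1 y2 assume y: "y1 \<in> {y. r < lamK y}" "y2 \<in> {y. r < lamK y}"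
      have "s * lamK y1 + (1 - s) * measure lborel (Pair (fst a - y2) -` L)
          \<le> lamM (s * y1 + (1 - s) * (fst a - y2))"
        unfolding lamM_def lamK_def
      proof (rule fib_concave[OF K cL vL M s combL])
        show "Pair y1 -` K \<noteq> {}" using y r fib_ne unfolding lamK_def by auto
        show "Pair (fst a - y2) -` L \<noteq> {}" using y r fib_ne[of r "fst a - y2" L] lamL[of "fst a - y2"] by auto
      qed
      moreover have "measure lborel (Pair (fst a - y2) -` L) = lamK y2" using lamL by simp
      moreover have "r < s * lamK y1 + (1 - s) * lamK y2" using y s by (intro comb_gt) auto
      ultimately show "s * y1 + (1 - s) * (fst a - y2) \<in> {y. r < lamM y}" by auto
    qed
  qed
  have "emeasure lborel K = (\<integral>\<^sup>+r. indicator {0..} r * emeasure lborel {y. r < lamK y} \<partial>lborel)"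
    unfolding areaK by (rule layer_cake) (auto simp: lamK_def[abs_def] meas_fib(2) borel_compact K(1))
  also have "\<dots> \<le> (\<integral>\<^sup>+r. indicator {0..} r * emeasure lborel {y. r < lamM y} \<partial>lborel)"
    by (intro nn_integral_mono) (auto simp: indicator_def intro: key)
  also have "\<dots> = emeasure lborel M"
    unfolding areaM by (rule layer_cake[symmetric]) (auto simp: lamM_def[abs_def] meas_fib(2) borel_compact M)
  finally show ?thesis .
qed


lemma powr_neg_half:
  assumes "0 \<le> (x::real)"
  shows "x powr (- (1/2)) = 1 / sqrt x"
proof (cases "x = 0")
  case True then show ?thesis by simp
next
  case False
  have "x powr (- (1/2)) = inverse (x powr (1/2))" by (rule powr_minus)
  also have "x powr (1/2) = sqrt x" using assms by (rule powr_half_sqrt)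
  finally show ?thesis by (simp add: inverse_eq_divide)
qed

lemma G_anti:
  fixes h x y :: real
  assumes "0 < x" "x \<le> y" "y \<le> h"
  shows "1 / sqrt y + 1 / sqrt (2*h - y) \<le> 1 / sqrt x + 1 / sqrt (2*h - x)"
proof -
  define G where "G t = t powr (-1/2) + (2*h - t) powr (-1/2)" for t :: real
  have "G y \<le> G x"
  proof (rule DERIV_nonpos_imp_nonincreasing[OF assms(2)])
    fix t assume t: "x \<le> t" "t \<le> y"
    then have t0: "0 < t" and t1: "t \<le> 2*h - t" "0 < 2*h - t" using assms by auto
    have d1: "((\<lambda>t. t powr (-1/2)) has_real_derivative (-1/2) * t powr (-1/2 - 1)) (at t)"
      by (rule has_real_derivative_powr) (rule t0)
    have d2': "((\<lambda>t. 2*h - t) has_real_derivative -1) (at t)"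
      by (auto intro!: derivative_eq_intros)
    have d2: "((\<lambda>t. (2*h - t) powr (-1/2)) has_real_derivative ((-1/2) * (2*h - t) powr (-1/2 - 1)) * (-1)) (at t)"
      using DERIV_chain2[OF has_real_derivative_powr[OF t1(2), where r="-1/2"] d2'] .
    have "(2*h - t) powr (-1/2 - 1) \<le> t powr (-1/2 - 1)"
      by (rule powr_mono2') (use t0 t1 in auto)
    then have "(-1/2) * t powr (-1/2 - 1) + ((-1/2) * (2*h - t) powr (-1/2 - 1)) * (-1) \<le> 0"
      by simp
    then show "\<exists>D. (G has_real_derivative D) (at t) \<and> D \<le> 0"
      unfolding G_def using DERIV_add[OF d1 d2] by blast
  qed
  moreover have "0 \<le> 2*h - y" "0 \<le> 2*h - x" using assms by auto
  ultimately show ?thesis unfolding G_def using assms by (simp add: powr_neg_half)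
qed

lemma G_cont:
  fixes h :: real
  assumes "0 < h"
  shows "continuous_on {h/8..h} (\<lambda>t. 1 / sqrt t + 1 / sqrt (2*h - t))"
proof -
  have "continuous_on {h/8..h} (\<lambda>t. t powr (-1/2) + (2*h - t) powr (-1/2))"
    using assms by (intro continuous_intros) auto
  moreover have "\<And>t. t \<in> {h/8..h} \<Longrightarrow> t powr (-1/2) + (2*h - t) powr (-1/2) = 1 / sqrt t + 1 / sqrt (2*h - t)"
    using assms by (auto simp: powr_neg_half)
  ultimately show ?thesis using continuous_on_cong by (metis (no_types, lifting))
qed

lemma G_lower:
  fixes h z :: real
  assumes "0 < z" "z < 2*h"
  shows "2 / sqrt h \<le> 1 / sqrt z + 1 / sqrt (2*h - z)"
proof -
  define u where "u = sqrt z"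
  define v where "v = sqrt (2*h - z)"
  have u: "0 < u" and v: "0 < v" using assms by (auto simp: u_def v_def)
  have h: "0 < h" using assms by simp
  have uv: "u^2 + v^2 = 2*h" using assms by (simp add: u_def v_def)
  have "(u + v)^2 \<le> (2 * sqrt h)^2"
  proof -
    have "0 \<le> (u - v) * (u - v)" by simp
    then have "(u + v)^2 \<le> 2 * (u^2 + v^2)" by (simp add: power2_eq_square algebra_simps)
    also have "\<dots> = (2 * sqrt h)^2" using uv h by (simp add: power_mult_distrib)
    finally show ?thesis .
  qed
  then have s: "u + v \<le> 2 * sqrt h" by (rule power2_le_imp_le) (use h in simp)
  have "0 \<le> (u - v)^2" by simp
  then have q: "4 * (u * v) \<le> (u + v) * (u + v)" by (simp add: power2_eq_square algebra_simps)
  have e: "1 / u + 1 / v = (u + v) / (u * v)" using u v by (simp add: field_simps)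
  have "4 / (u + v) \<le> (u + v) / (u * v)"
    using q u v by (simp add: divide_simps)
  moreover have "2 / sqrt h \<le> 4 / (u + v)"
  proof -
    have "2 * (u + v) \<le> 4 * sqrt h" using s by simp
    then show ?thesis using u v h by (simp add: divide_simps)
  qed
  ultimately have "2 / sqrt h \<le> 1 / u + 1 / v" using e by linarith
  then show ?thesis unfolding u_def v_def .
qed

lemma int_inv_sqrt:
  fixes h :: real
  assumes "0 < h"
  shows "(\<integral>\<^sup>+z. ennreal (1 / sqrt z) * indicator {0..2*h} z \<partial>lborel) = ennreal (2 * sqrt (2*h))"
proof -
  have i1: "((\<lambda>x. x powr (-1/2)) has_integral ((2*h) powr (-1/2 + 1) / (-1/2 + 1))) {0..2*h}"
    using assms by (intro has_integral_powr_from_0) auto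
  have e: "(2*h) powr (-1/2 + 1) / (-1/2 + 1) = 2 * sqrt (2*h)"
    using assms by (simp add: powr_half_sqrt)
  from i1 have "((\<lambda>x. x powr (-1/2)) has_integral (2 * sqrt (2*h))) {0..2*h}" unfolding e .
  then have "((\<lambda>x. 1 / sqrt x) has_integral (2 * sqrt (2*h))) {0..2*h}"
    by (rule has_integral_eq[rotated]) (simp add: powr_neg_half)
  then show ?thesis
    by (intro nn_integral_has_integral_lebesgue') auto
qed

lemma int_inv_sqrt_refl:
  fixes h :: real
  assumes "0 < h"
  shows "(\<integral>\<^sup>+z. ennreal (1 / sqrt (2*h - z)) * indicator {0..2*h} z \<partial>lborel) = ennreal (2 * sqrt (2*h))"
proof -
  have "(\<integral>\<^sup>+z. ennreal (1 / sqrt z) * indicator {0..2*h} z \<partial>lborel)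
      = ennreal \<bar>-1\<bar> * (\<integral>\<^sup>+z. ennreal (1 / sqrt (2*h + (-1) * z)) * indicator {0..2*h} (2*h + (-1) * z) \<partial>lborel)"
    using nn_integral_real_affine[where f="\<lambda>z. ennreal (1 / sqrt z) * indicator {0..2*h} z" and c="-1" and t="2*h"]
    by simp
  also have "(\<integral>\<^sup>+z. ennreal (1 / sqrt (2*h + (-1) * z)) * indicator {0..2*h} (2*h + (-1) * z) \<partial>lborel)
     = (\<integral>\<^sup>+z. ennreal (1 / sqrt (2*h - z)) * indicator {0..2*h} z \<partial>lborel)"
    by (intro nn_integral_cong) (auto simp: indicator_def)
  finally show ?thesis using int_inv_sqrt[OF assms] by simp
qed


lemma cheb:
  fixes a :: "real \<Rightarrow> real" and h V :: real
  assumes h: "0 < h"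
    and am[measurable]: "a \<in> borel_measurable borel"
    and a0: "\<And>z. 0 \<le> a z"
    and aout: "\<And>z. z < 0 \<or> 2*h < z \<Longrightarrow> a z = 0"
    and asym: "\<And>z. a (2*h - z) = a z"
    and amono: "\<And>z1 z2. 0 \<le> z1 \<Longrightarrow> z1 \<le> z2 \<Longrightarrow> z2 \<le> h \<Longrightarrow> a z1 \<le> a z2"
    and V: "(\<integral>\<^sup>+z. ennreal (a z) \<partial>lborel) = ennreal V" and V0: "0 \<le> V"
  shows "(\<integral>\<^sup>+z. ennreal (a z * (1 / sqrt z)) \<partial>lborel) \<le> ennreal (sqrt 2 * V / sqrt h)"
    and "ennreal (V / sqrt h) \<le> (\<integral>\<^sup>+z. ennreal (a z * (1 / sqrt z)) \<partial>lborel)"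
proof -
  define I where "I = (\<integral>\<^sup>+z. ennreal (a z * (1 / sqrt z)) \<partial>lborel)"
  define G where "G z = 1 / sqrt z + 1 / sqrt (2*h - z)" for z
  have Gm[measurable]: "G \<in> borel_measurable borel" unfolding G_def[abs_def] by measurable
  have R: "I = (\<integral>\<^sup>+z. ennreal (a z * (1 / sqrt (2*h - z))) \<partial>lborel)"
    using nn_integral_real_affine[where f="\<lambda>z. ennreal (a z * (1 / sqrt z))" and c="-1" and t="2*h"]
    by (simp add: asym I_def)
  have S: "I + I = (\<integral>\<^sup>+z. ennreal (a z * G z) \<partial>lborel)"
  proof -
    have "I + I = (\<integral>\<^sup>+z. ennreal (a z * (1 / sqrt z)) \<partial>lborel) + (\<integral>\<^sup>+z. ennreal (a z * (1 / sqrt (2*h - z))) \<partial>lborel)"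
      by (simp only: I_def[symmetric] R[symmetric])
    also have "\<dots> = (\<integral>\<^sup>+z. ennreal (a z * (1 / sqrt z)) + ennreal (a z * (1 / sqrt (2*h - z))) \<partial>lborel)"
      by (rule nn_integral_add[symmetric]) auto
    also have "\<dots> = (\<integral>\<^sup>+z. ennreal (a z * G z) \<partial>lborel)"
    proof (intro nn_integral_cong)
      fix z
      show "ennreal (a z * (1 / sqrt z)) + ennreal (a z * (1 / sqrt (2*h - z))) = ennreal (a z * G z)"
      proof (cases "0 \<le> z \<and> z \<le> 2*h")
        case True
        then have "0 \<le> a z * (1 / sqrt z)" "0 \<le> a z * (1 / sqrt (2*h - z))" using a0 by auto
        then have "ennreal (a z * (1 / sqrt z)) + ennreal (a z * (1 / sqrt (2*h - z))) = ennreal (a z * (1 / sqrt z) + a z * (1 / sqrt (2*h - z)))"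
          by (intro ennreal_plus[symmetric])
        also have "a z * (1 / sqrt z) + a z * (1 / sqrt (2*h - z)) = a z * G z" by (simp add: G_def distrib_left)
        finally show ?thesis .
      next
        case False then show ?thesis using aout[of z] by auto
      qed
    qed
    finally show ?thesis .
  qed
  have AE2: "AE z in lborel. z \<noteq> 0 \<and> z \<noteq> 2*h"
    using AE_lborel_singleton[of 0] AE_lborel_singleton[of "2*h"] by eventually_elim auto
  have intV: "(\<integral>\<^sup>+z. ennreal (a z * k) \<partial>lborel) = ennreal V * ennreal k" if k: "0 \<le> k" for k
  proof -
    have "(\<integral>\<^sup>+z. ennreal (a z * k) \<partial>lborel) = (\<integral>\<^sup>+z. ennreal (a z) * ennreal k \<partial>lborel)"
      using a0 k by (intro nn_integral_cong) (simp add: ennreal_mult)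
    also have "\<dots> = ennreal V * ennreal k" by (simp add: nn_integral_multc V)
    finally show ?thesis .
  qed
  have "ennreal V * ennreal (2 / sqrt h) \<le> I + I"
  proof -
    have "(\<integral>\<^sup>+z. ennreal (a z * (2 / sqrt h)) \<partial>lborel) \<le> (\<integral>\<^sup>+z. ennreal (a z * G z) \<partial>lborel)"
    proof (rule nn_integral_mono_AE)
      show "AE z in lborel. ennreal (a z * (2 / sqrt h)) \<le> ennreal (a z * G z)"
        using AE2
      proof eventually_elim
        fix z assume z: "z \<noteq> 0 \<and> z \<noteq> 2*h"
        show "ennreal (a z * (2 / sqrt h)) \<le> ennreal (a z * G z)"
        proof (cases "0 < z \<and> z < 2*h")
          case True
          then have "2 / sqrt h \<le> G z" unfolding G_def by (intro G_lower) auto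
          then show ?thesis using a0[of z] by (intro ennreal_leI mult_left_mono) auto
        next
          case False then show ?thesis using z aout[of z] by auto
        qed
      qed
    qed
    moreover have "(\<integral>\<^sup>+z. ennreal (a z * (2 / sqrt h)) \<partial>lborel) = ennreal V * ennreal (2 / sqrt h)"
      by (rule intV) (use h in simp)
    ultimately show ?thesis using S by simp
  qed
  moreover have "ennreal V * ennreal (2 / sqrt h) = 2 * ennreal (V / sqrt h)"
    using V0 h by (simp add: ennreal_mult[symmetric] ennreal_numeral[symmetric] del: ennreal_numeral)
  moreover have "I + I = 2 * I" by (simp add: mult_2)
  ultimately have "2 * ennreal (V / sqrt h) \<le> 2 * I" by simp
  then show "ennreal (V / sqrt h) \<le> (\<integral>\<^sup>+z. ennreal (a z * (1 / sqrt z)) \<partial>lborel)"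
    unfolding I_def[symmetric] by (subst (asm) ennreal_mult_le_mult_iff) auto
  define c where "c = 2 * sqrt 2 / sqrt h"
  have c0: "0 < c" using h by (simp add: c_def)
  have sq8: "sqrt 8 = 2 * sqrt (2::real)"
  proof -
    have "sqrt (8::real) = sqrt (4 * 2)" by simp
    also have "\<dots> = sqrt 4 * sqrt 2" by (rule real_sqrt_mult)
    finally show ?thesis by simp
  qed
  have Gh: "G h \<le> c"
  proof -
    have "G h = 2 / sqrt h" by (simp add: G_def)
    also have "\<dots> \<le> c" unfolding c_def using h by (intro divide_right_mono) auto
    finally show ?thesis .
  qed
  have Gh8: "c \<le> G (h/8)"
  proof -
    have "1 / sqrt (h/8) = c" unfolding c_def using h by (simp add: real_sqrt_divide sq8)
    moreover have "0 \<le> 1 / sqrt (2*h - h/8)" using h by simp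
    ultimately show ?thesis by (simp add: G_def)
  qed
  obtain z0 where z0: "h/8 \<le> z0" "z0 \<le> h" "G z0 = c"
    using IVT2'[of G h c "h/8"] Gh Gh8 h G_cont[OF h] unfolding G_def by auto
  have z0p: "0 < z0" using z0 h by simp
  have half: "(a z - a z0) * (G z - c) \<le> 0" if z: "0 < z" "z \<le> h" for z
  proof (cases "z \<le> z0")
    case True
    have "a z \<le> a z0" using amono[of z z0] True z z0 by auto
    moreover have "G z0 \<le> G z" unfolding G_def by (rule G_anti) (use z True z0 in auto)
    ultimately show ?thesis using z0 by (intro mult_nonpos_nonneg) auto
  next
    case False
    have "a z0 \<le> a z" using amono[of z0 z] False z z0p by auto
    moreover have "G z \<le> G z0" unfolding G_def by (rule G_anti) (use z False z0p in auto)
    ultimately show ?thesis using z0 by (intro mult_nonneg_nonpos) auto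
  qed
  have sign: "(a z - a z0) * (G z - c) \<le> 0" if z: "0 < z" "z < 2*h" for z
  proof (cases "z \<le> h")
    case True then show ?thesis using half z by auto
  next
    case False
    have "a (2*h - z) = a z" by (rule asym)
    moreover have "G (2*h - z) = G z" by (simp add: G_def)
    moreover have "(a (2*h - z) - a z0) * (G (2*h - z) - c) \<le> 0" using False z by (intro half) auto
    ultimately show ?thesis by simp
  qed
  let ?J = "{0<..<2*h}"
  have P: "ennreal (a z * G z) * indicator ?J z + ennreal (a z0 * c) * indicator ?J z
      \<le> ennreal (a z * c) * indicator ?J z + ennreal (a z0 * G z) * indicator ?J z" for z
  proof (cases "z \<in> ?J")
    case True
    then have Gz: "0 \<le> G z" by (simp add: G_def)
    have "a z * G z + a z0 * c \<le> a z * c + a z0 * G z"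
      using sign[of z] True by (simp add: algebra_simps)
    then have "ennreal (a z * G z + a z0 * c) \<le> ennreal (a z * c + a z0 * G z)" by (rule ennreal_leI)
    moreover have "ennreal (a z * G z) + ennreal (a z0 * c) = ennreal (a z * G z + a z0 * c)"
      using Gz c0 a0[of z] a0[of z0] by (intro ennreal_plus[symmetric]) auto
    moreover have "ennreal (a z * c) + ennreal (a z0 * G z) = ennreal (a z * c + a z0 * G z)"
      using Gz c0 a0[of z] a0[of z0] by (intro ennreal_plus[symmetric]) auto
    moreover have "indicator ?J z = (1::ennreal)" using True by simp
    ultimately show ?thesis by (simp only: mult_1_right)
  next
    case False then show ?thesis by simp
  qed
  have L1: "(\<integral>\<^sup>+z. ennreal (a z * G z) * indicator ?J z \<partial>lborel) = I + I"
    unfolding S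
  proof (rule nn_integral_cong_AE)
    show "AE z in lborel. ennreal (a z * G z) * indicator ?J z = ennreal (a z * G z)"
      using AE2 by eventually_elim (use aout in \<open>auto simp: indicator_def\<close>)
  qed
  have L2: "(\<integral>\<^sup>+z. ennreal (a z0 * c) * indicator ?J z \<partial>lborel) = ennreal (a z0 * c) * ennreal (2*h)"
    using h by (simp add: nn_integral_cmult_indicator)
  have R1: "(\<integral>\<^sup>+z. ennreal (a z * c) * indicator ?J z \<partial>lborel) \<le> ennreal V * ennreal c"
  proof -
    have "(\<integral>\<^sup>+z. ennreal (a z * c) * indicator ?J z \<partial>lborel) \<le> (\<integral>\<^sup>+z. ennreal (a z * c) \<partial>lborel)"
      by (intro nn_integral_mono) (auto simp: indicator_def)
    also have "\<dots> = ennreal V * ennreal c" using intV c0 by simp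
    finally show ?thesis .
  qed
  have intG: "(\<integral>\<^sup>+z. ennreal (G z) * indicator ?J z \<partial>lborel) = ennreal (4 * sqrt (2*h))"
  proof -
    have "(\<integral>\<^sup>+z. ennreal (G z) * indicator ?J z \<partial>lborel)
      = (\<integral>\<^sup>+z. ennreal (1 / sqrt z) * indicator {0..2*h} z + ennreal (1 / sqrt (2*h - z)) * indicator {0..2*h} z \<partial>lborel)"
    proof (rule nn_integral_cong_AE)
      show "AE z in lborel. ennreal (G z) * indicator ?J z = ennreal (1 / sqrt z) * indicator {0..2*h} z + ennreal (1 / sqrt (2*h - z)) * indicator {0..2*h} z"
        using AE2
      proof eventually_elim
        fix z assume z: "z \<noteq> 0 \<and> z \<noteq> 2*h"
        show "ennreal (G z) * indicator ?J z = ennreal (1 / sqrt z) * indicator {0..2*h} z + ennreal (1 / sqrt (2*h - z)) * indicator {0..2*h} z"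
        proof (cases "z \<in> ?J")
          case True
          then have "ennreal (G z) = ennreal (1 / sqrt z) + ennreal (1 / sqrt (2*h - z))"
            unfolding G_def by (intro ennreal_plus) auto
          moreover have "indicator ?J z = (1::ennreal)" "indicator {0..2*h} z = (1::ennreal)" using True by auto
          ultimately show ?thesis by (simp only: mult_1_right)
        next
          case False then show ?thesis using z by (auto simp: indicator_def)
        qed
      qed
    qed
    also have "\<dots> = (\<integral>\<^sup>+z. ennreal (1 / sqrt z) * indicator {0..2*h} z \<partial>lborel) + (\<integral>\<^sup>+z. ennreal (1 / sqrt (2*h - z)) * indicator {0..2*h} z \<partial>lborel)"
      by (rule nn_integral_add) auto
    also have "\<dots> = ennreal (4 * sqrt (2*h))"
      unfolding int_inv_sqrt[OF h] int_inv_sqrt_refl[OF h] using h by (subst ennreal_plus[symmetric]) auto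
    finally show ?thesis .
  qed
  have R2: "(\<integral>\<^sup>+z. ennreal (a z0 * G z) * indicator ?J z \<partial>lborel) = ennreal (a z0) * ennreal (4 * sqrt (2*h))"
  proof -
    have "(\<integral>\<^sup>+z. ennreal (a z0 * G z) * indicator ?J z \<partial>lborel) = (\<integral>\<^sup>+z. ennreal (a z0) * (ennreal (G z) * indicator ?J z) \<partial>lborel)"
    proof (intro nn_integral_cong)
      fix z show "ennreal (a z0 * G z) * indicator ?J z = ennreal (a z0) * (ennreal (G z) * indicator ?J z)"
        by (cases "z \<in> ?J") (auto simp: G_def ennreal_mult a0)
    qed
    also have "\<dots> = ennreal (a z0) * (\<integral>\<^sup>+z. ennreal (G z) * indicator ?J z \<partial>lborel)"
      by (rule nn_integral_cmult) auto
    finally show ?thesis using intG by simp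
  qed
  have key: "c * (2*h) = 4 * sqrt (2*h)"
  proof -
    have "sqrt h * sqrt h = h" using h by simp
    moreover have "sqrt (2*h) = sqrt 2 * sqrt h" by (rule real_sqrt_mult)
    ultimately show ?thesis unfolding c_def using h by (simp add: field_simps)
  qed
  have "(\<integral>\<^sup>+z. ennreal (a z * G z) * indicator ?J z + ennreal (a z0 * c) * indicator ?J z \<partial>lborel)
      \<le> (\<integral>\<^sup>+z. ennreal (a z * c) * indicator ?J z + ennreal (a z0 * G z) * indicator ?J z \<partial>lborel)"
    by (intro nn_integral_mono P)
  also have "(\<integral>\<^sup>+z. ennreal (a z * G z) * indicator ?J z + ennreal (a z0 * c) * indicator ?J z \<partial>lborel)
      = (\<integral>\<^sup>+z. ennreal (a z * G z) * indicator ?J z \<partial>lborel) + (\<integral>\<^sup>+z. ennreal (a z0 * c) * indicator ?J z \<partial>lborel)"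
    by (rule nn_integral_add) auto
  also have "(\<integral>\<^sup>+z. ennreal (a z * c) * indicator ?J z + ennreal (a z0 * G z) * indicator ?J z \<partial>lborel)
      = (\<integral>\<^sup>+z. ennreal (a z * c) * indicator ?J z \<partial>lborel) + (\<integral>\<^sup>+z. ennreal (a z0 * G z) * indicator ?J z \<partial>lborel)"
    by (rule nn_integral_add) auto
  finally have "(I + I) + ennreal (a z0 * c) * ennreal (2*h) \<le> ennreal V * ennreal c + ennreal (a z0) * ennreal (4 * sqrt (2*h))"
    unfolding L1 L2 R2 using R1 by (meson add_right_mono order.trans)
  moreover have "ennreal (a z0 * c) * ennreal (2*h) = ennreal (a z0) * ennreal (4 * sqrt (2*h))"
    using a0[of z0] c0 h key by (simp add: ennreal_mult[symmetric] mult.assoc)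
  ultimately have "(I + I) + ennreal (a z0) * ennreal (4 * sqrt (2*h)) \<le> ennreal V * ennreal c + ennreal (a z0) * ennreal (4 * sqrt (2*h))"
    by simp
  moreover have "ennreal (a z0) * ennreal (4 * sqrt (2*h)) \<noteq> top"
    by (simp add: ennreal_mult_eq_top_iff)
  ultimately have "I + I \<le> ennreal V * ennreal c"
    by (metis ennreal_add_left_cancel_le add.commute infinity_ennreal_def)
  moreover have "ennreal V * ennreal c = 2 * ennreal (sqrt 2 * V / sqrt h)"
  proof -
    have "ennreal V * ennreal c = ennreal (V * c)" using V0 c0 by (simp add: ennreal_mult)
    also have "V * c = 2 * (sqrt 2 * V / sqrt h)" by (simp add: c_def)
    also have "ennreal (2 * (sqrt 2 * V / sqrt h)) = ennreal 2 * ennreal (sqrt 2 * V / sqrt h)"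
      by (rule ennreal_mult) (use V0 h in auto)
    finally show ?thesis by simp
  qed
  moreover have "I + I = 2 * I" by (simp add: mult_2)
  ultimately have "2 * I \<le> 2 * ennreal (sqrt 2 * V / sqrt h)" by simp
  then show "(\<integral>\<^sup>+z. ennreal (a z * (1 / sqrt z)) \<partial>lborel) \<le> ennreal (sqrt 2 * V / sqrt h)"
    unfolding I_def[symmetric] by (subst (asm) ennreal_mult_le_mult_iff) auto
qed


lemma core:
  fixes T :: "(real \<times> (real \<times> real)) set" and c :: "real \<times> (real \<times> real)"
  assumes cT: "compact T" and vT: "convex T"
    and sym: "\<And>q. q \<in> T \<Longrightarrow> 2 *\<^sub>R c - q \<in> T"
    and pos: "\<And>q. q \<in> T \<Longrightarrow> 0 \<le> fst q"
    and hpos: "0 < fst c"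
  shows "(\<integral>\<^sup>+q. indicator T q * ennreal (1 / sqrt (fst q)) \<partial>lborel) \<le> ennreal (sqrt 2 * measure lborel T / sqrt (fst c))"
    and "ennreal (measure lborel T / sqrt (fst c)) \<le> (\<integral>\<^sup>+q. indicator T q * ennreal (1 / sqrt (fst q)) \<partial>lborel)"
proof -
  define h where "h = fst c"
  define a where "a z = measure lborel (Pair z -` T)" for z
  have Tb: "T \<in> sets borel" using cT by (simp add: borel_compact)
  have Tp[measurable]: "T \<in> sets (lborel \<Otimes>\<^sub>M lborel)" using Tb sets_lborel_pair by metis
  have am: "a \<in> borel_measurable borel" unfolding a_def[abs_def] using meas_fib(2)[OF Tb] .
  have a0: "0 \<le> a z" for z unfolding a_def by simp
  have ea: "emeasure lborel (Pair z -` T) = ennreal (a z)" for z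
    unfolding a_def by (rule emeasure_fib_compact[OF cT])
  have refl: "2 *\<^sub>R c - (z, w) = (2 * h - z, 2 *\<^sub>R snd c - w)" for z w
    by (simp add: h_def prod_eq_iff)
  have aout: "a z = 0" if "z < 0 \<or> 2*h < z" for z
  proof -
    have "Pair z -` T = {}"
    proof (rule ccontr)
      assume "Pair z -` T \<noteq> {}"
      then obtain w where w: "(z, w) \<in> T" by auto
      have "0 \<le> z" using pos[OF w] by simp
      moreover have "0 \<le> 2 * h - z" using pos[OF sym[OF w]] refl by simp
      ultimately show False using that by auto
    qed
    then show ?thesis unfolding a_def by simp
  qed
  have asym: "a (2*h - z) = a z" for z
  proof -
    have eq: "Pair (2*h - z) -` T = (\<lambda>w. 2 *\<^sub>R snd c - w) ` (Pair z -` T)"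
    proof (intro set_eqI iffI)
      fix w assume "w \<in> Pair (2*h - z) -` T"
      then have "2 *\<^sub>R c - (2*h - z, w) \<in> T" using sym by auto
      then have "2 *\<^sub>R snd c - w \<in> Pair z -` T" using refl by simp
      then show "w \<in> (\<lambda>w. 2 *\<^sub>R snd c - w) ` (Pair z -` T)"
        by (intro image_eqI[where x="2 *\<^sub>R snd c - w"]) auto
    next
      fix w assume "w \<in> (\<lambda>w. 2 *\<^sub>R snd c - w) ` (Pair z -` T)"
      then obtain w' where w': "(z, w') \<in> T" "w = 2 *\<^sub>R snd c - w'" by auto
      have "2 *\<^sub>R c - (z, w') \<in> T" using sym w' by auto
      then show "w \<in> Pair (2*h - z) -` T" using refl w' by simp
    qed
    have "emeasure lborel (Pair (2*h - z) -` T) = emeasure lborel (Pair z -` T)"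
      unfolding eq by (rule emeasure_reflect) (use compact_fib[OF cT] borel_compact in auto)
    then show ?thesis unfolding ea by (metis ennreal_inj a0)
  qed
  have amono: "a z1 \<le> a z2" if z: "0 \<le> z1" "z1 \<le> z2" "z2 \<le> h" for z1 z2
  proof (cases "z1 = h")
    case True then show ?thesis using z by auto
  next
    case False
    then have z1h: "z1 < h" using z by auto
    define s where "s = (2*h - z1 - z2) / (2*h - 2*z1)"
    have s: "0 \<le> s" "s \<le> 1" using z z1h by (auto simp: s_def field_simps)
    have "s * (2*h - 2*z1) = 2*h - z1 - z2" using z1h by (simp add: s_def)
    moreover have "s * z1 + (1 - s) * (2*h - z1) = (2*h - z1) - s * (2*h - 2*z1)" by (simp add: algebra_simps)
    ultimately have sz: "s * z1 + (1 - s) * (2*h - z1) = z2" by simp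
    have "emeasure lborel (Pair z1 -` T) \<le> emeasure lborel (Pair z2 -` T)"
    proof (rule BM2[where s=s and a="2 *\<^sub>R snd c"])
      show "compact (Pair z1 -` T)" "compact (Pair z2 -` T)" using compact_fib[OF cT] by auto
      show "convex (Pair z1 -` T)" using convex_fib[OF vT] by auto
      show "0 \<le> s" "s \<le> 1" by fact+
      fix p q assume pq: "p \<in> Pair z1 -` T" "q \<in> Pair z1 -` T"
      have "2 *\<^sub>R c - (z1, q) \<in> T" using sym pq by auto
      then have q': "(2*h - z1, 2 *\<^sub>R snd c - q) \<in> T" using refl by simp
      have "s *\<^sub>R (z1, p) + (1 - s) *\<^sub>R (2*h - z1, 2 *\<^sub>R snd c - q) \<in> T"
        using pq q' s by (intro convexD[OF vT]) auto
      moreover have "s *\<^sub>R (z1, p) + (1 - s) *\<^sub>R (2*h - z1, 2 *\<^sub>R snd c - q)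
          = (z2, s *\<^sub>R p + (1 - s) *\<^sub>R (2 *\<^sub>R snd c - q))"
        using sz by simp
      ultimately show "s *\<^sub>R p + (1 - s) *\<^sub>R (2 *\<^sub>R snd c - q) \<in> Pair z2 -` T" by simp
    qed
    then show ?thesis unfolding ea using a0 by simp
  qed
  have V: "(\<integral>\<^sup>+z. ennreal (a z) \<partial>lborel) = ennreal (measure lborel T)"
  proof -
    have "emeasure lborel T = (\<integral>\<^sup>+z. ennreal (a z) \<partial>lborel)"
      unfolding area_fib[OF Tb] ea ..
    moreover have "emeasure lborel T = ennreal (measure lborel T)"
      using emeasure_compact_finite[OF cT] by (intro emeasure_eq_ennreal_measure) (simp add: less_top)
    ultimately show ?thesis by simp
  qed
  have INT: "(\<integral>\<^sup>+q. indicator T q * ennreal (1 / sqrt (fst q)) \<partial>lborel) = (\<integral>\<^sup>+z. ennreal (a z * (1 / sqrt z)) \<partial>lborel)"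
  proof -
    have m: "(\<lambda>q. indicator T q * ennreal (1 / sqrt (fst q))) \<in> borel_measurable (lborel \<Otimes>\<^sub>M lborel)"
      by measurable
    have "(\<integral>\<^sup>+q. indicator T q * ennreal (1 / sqrt (fst q)) \<partial>lborel)
        = (\<integral>\<^sup>+q. indicator T q * ennreal (1 / sqrt (fst q)) \<partial>(lborel \<Otimes>\<^sub>M lborel))"
      by (simp add: lborel_prod)
    also have "\<dots> = (\<integral>\<^sup>+z. \<integral>\<^sup>+w. indicator T (z, w) * ennreal (1 / sqrt (fst (z, w))) \<partial>lborel \<partial>lborel)"
      by (rule lborel.nn_integral_fst[symmetric]) (rule m)
    also have "\<dots> = (\<integral>\<^sup>+z. ennreal (a z * (1 / sqrt z)) \<partial>lborel)"
    proof (intro nn_integral_cong)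
      fix z
      have "(\<integral>\<^sup>+w. indicator T (z, w) * ennreal (1 / sqrt (fst (z, w))) \<partial>lborel)
          = (\<integral>\<^sup>+w. indicator (Pair z -` T) w * ennreal (1 / sqrt z) \<partial>lborel)"
        by (intro nn_integral_cong) (simp add: indicator_def)
      also have "\<dots> = (\<integral>\<^sup>+w. indicator (Pair z -` T) w \<partial>lborel) * ennreal (1 / sqrt z)"
        by (rule nn_integral_multc) (use compact_fib[OF cT, of z] borel_compact in auto)
      also have "(\<integral>\<^sup>+w. indicator (Pair z -` T) w \<partial>lborel) * ennreal (1 / sqrt z) = emeasure lborel (Pair z -` T) * ennreal (1 / sqrt z)"
        by (subst nn_integral_indicator) (use compact_fib[OF cT, of z] borel_compact in auto)
      also have "\<dots> = ennreal (a z * (1 / sqrt z))"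
        unfolding ea by (rule ennreal_mult'[symmetric]) (rule a0)
      finally show "(\<integral>\<^sup>+w. indicator T (z, w) * ennreal (1 / sqrt (fst (z, w))) \<partial>lborel) = ennreal (a z * (1 / sqrt z))" .
    qed
    finally show ?thesis .
  qed
  note ch = cheb[of h a "measure lborel T", OF _ am a0 aout asym amono V measure_nonneg]
  show "(\<integral>\<^sup>+q. indicator T q * ennreal (1 / sqrt (fst q)) \<partial>lborel) \<le> ennreal (sqrt 2 * measure lborel T / sqrt (fst c))"
    unfolding INT using ch(1) hpos h_def by auto
  show "ennreal (measure lborel T / sqrt (fst c)) \<le> (\<integral>\<^sup>+q. indicator T q * ennreal (1 / sqrt (fst q)) \<partial>lborel)"
    unfolding INT using ch(2) hpos h_def by auto
qed


definition psi3 :: "real \<times> (real \<times> real) \<Rightarrow> real^3" where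
  "psi3 q = (\<chi> i. if i = 3 then fst q else if i = 2 then fst (snd q) else snd (snd q))"

definition phi3 :: "real^3 \<Rightarrow> real \<times> (real \<times> real)" where
  "phi3 p = (p$3, (p$2, p$1))"

lemma psi3_nth[simp]: "psi3 q $ 3 = fst q" "psi3 q $ 2 = fst (snd q)" "psi3 q $ 1 = snd (snd q)"
  by (simp_all add: psi3_def)

lemma psi3_phi3[simp]: "psi3 (phi3 p) = p"
  by (simp add: vec_eq_iff forall_3 phi3_def)

lemma phi3_psi3[simp]: "phi3 (psi3 q) = q"
  by (simp add: phi3_def)

lemma psi3_cont: "continuous_on UNIV psi3"
  unfolding psi3_def
  apply (intro continuous_on_vec_lambda)
  subgoal for i by (cases "i = 3"; cases "i = 2") (auto intro!: continuous_intros)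
  done

lemma psi3_meas[measurable]: "psi3 \<in> borel_measurable borel"
  by (rule borel_measurable_continuous_onI[OF psi3_cont])

lemma linear_phi3: "linear phi3"
  by (rule linearI) (simp_all add: phi3_def)

lemma psi3_lin: "psi3 (2 *\<^sub>R c - q) = 2 *\<^sub>R psi3 c - psi3 q"
  by (simp add: vec_eq_iff forall_3)

lemma prod_UNIV_3: "prod f (UNIV::3 set) = f 1 * f 2 * f 3"
  unfolding UNIV_3 by (simp add: ac_simps)

lemma prodB3:
  fixes l u :: "real^3"
  assumes "\<And>b. b \<in> Basis \<Longrightarrow> l \<bullet> b \<le> u \<bullet> b"
  shows "(\<Prod>b\<in>Basis. (u - l) \<bullet> b) = (u$1 - l$1) * (u$2 - l$2) * (u$3 - l$3)"
proof -
  have "(\<Prod>b\<in>Basis. (u - l) \<bullet> b) = Henstock_Kurzweil_Integration.content (cbox l u)"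
    using assms by (simp add: content_cbox inner_diff_left)
  also have "\<dots> = prod (\<lambda>i. u$i - l$i) UNIV"
    by (rule content_cbox_cart) (use assms in \<open>auto simp: box_ne_empty\<close>)
  finally show ?thesis by (simp add: prod_UNIV_3)
qed

lemma distr_psi3: "distr lborel borel psi3 = (lborel :: (real^3) measure)"
proof -
  have "(lborel :: (real^3) measure) = distr lborel borel psi3"
  proof (rule lborel_eqI)
    fix l u :: "real^3" assume lu: "\<And>b. b \<in> Basis \<Longrightarrow> l \<bullet> b \<le> u \<bullet> b"
    have le: "l$i \<le> u$i" for i using lu[of "axis i 1"] by (simp add: inner_axis)
    have pre: "psi3 -` box l u = {l$3<..<u$3} \<times> ({l$2<..<u$2} \<times> {l$1<..<u$1})"
    proof (intro set_eqI)
      fix q :: "real \<times> (real \<times> real)"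
      obtain z y x where q: "q = (z, (y, x))" by (cases q) auto
      show "q \<in> psi3 -` box l u \<longleftrightarrow> q \<in> {l$3<..<u$3} \<times> ({l$2<..<u$2} \<times> {l$1<..<u$1})"
        unfolding q vimage_eq mem_box_cart forall_3 by auto
    qed
    have "emeasure (distr lborel borel psi3) (box l u) = emeasure lborel (psi3 -` box l u \<inter> space lborel)"
      by (rule emeasure_distr) auto
    also have "\<dots> = emeasure (lborel \<Otimes>\<^sub>M lborel) ({l$3<..<u$3} \<times> ({l$2<..<u$2} \<times> {l$1<..<u$1}))"
      unfolding pre by (simp add: lborel_prod)
    also have "\<dots> = emeasure lborel {l$3<..<u$3} * emeasure lborel ({l$2<..<u$2} \<times> {l$1<..<u$1})"
      by (rule lborel.emeasure_pair_measure_Times) (auto intro!: borel_open open_Times)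
    also have "emeasure lborel ({l$2<..<u$2} \<times> {l$1<..<u$1}) = emeasure (lborel \<Otimes>\<^sub>M lborel) ({l$2<..<u$2} \<times> {l$1<..<u$1})"
      by (simp add: lborel_prod)
    also have "\<dots> = emeasure lborel {l$2<..<u$2} * emeasure lborel {l$1<..<u$1}"
      by (rule lborel.emeasure_pair_measure_Times) auto
    also have "emeasure lborel {l$3<..<u$3} * (emeasure lborel {l$2<..<u$2} * emeasure lborel {l$1<..<u$1})
       = ennreal ((u$1 - l$1) * (u$2 - l$2) * (u$3 - l$3))"
      using le[of 1] le[of 2] le[of 3] by (simp add: ennreal_mult[symmetric] mult_ac)
    finally show "emeasure (distr lborel borel psi3) (box l u) = (\<Prod>b\<in>Basis. (u - l) \<bullet> b)"
      using prodB3[OF lu] by simp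
  qed simp
  then show ?thesis by simp
qed

theorem theorem1:
  fixes S :: "(real^3) set" and C :: "real^3" and K V :: real
  assumes "compact S" and "convex S"
    and "V = measure lebesgue S" and "V > 0"
    and "\<forall>P\<in>S. 2 *\<^sub>R C - P \<in> S"
    and "\<forall>P\<in>S. P $ 3 \<ge> 0"
    and "\<exists>P\<in>S. P $ 3 = 0"
    and "C $ 3 > 0"
    and "K > 0"
  shows "V / (K * sqrt (C $ 3)) \<le> drainage_time K S
         \<and> drainage_time K S \<le> sqrt 2 * V / (K * sqrt (C $ 3))"
proof -
  note cS = assms(1) and vS = assms(2) and VS = assms(3) and symS = assms(5) and posS = assms(6)
    and hC = assms(8) and K0 = assms(9)
  define T where "T = psi3 -` S"
  define c where "c = phi3 C"
  have T_img: "T = phi3 ` S"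
  proof (intro set_eqI iffI)
    fix q assume "q \<in> T"
    then show "q \<in> phi3 ` S" unfolding T_def by (intro image_eqI[where x="psi3 q"]) auto
  next
    fix q assume "q \<in> phi3 ` S"
    then obtain p where p: "p \<in> S" "q = phi3 p" by blast
    then show "q \<in> T" unfolding T_def by simp
  qed
  have Sb: "S \<in> sets borel" using cS by (simp add: borel_compact)
  have cT: "compact T" unfolding T_img
    by (intro compact_continuous_image linear_continuous_on cS) (rule linear_conv_bounded_linear[THEN iffD1, OF linear_phi3])
  have vT: "convex T" unfolding T_img by (rule convex_linear_image[OF linear_phi3 vS])
  have symT: "2 *\<^sub>R c - q \<in> T" if "q \<in> T" for q
    using that symS unfolding T_def c_def by (simp add: psi3_lin)
  have posT: "0 \<le> fst q" if "q \<in> T" for q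
    using that posS unfolding T_def by (metis psi3_nth(1) vimage_eq)
  have hc: "0 < fst c" using hC by (simp add: c_def phi3_def)
  have fstc: "fst c = C $ 3" by (simp add: c_def phi3_def)
  have ST: "emeasure lborel S = emeasure lborel T"
  proof -
    have "emeasure lborel S = emeasure (distr lborel borel psi3) S" by (simp add: distr_psi3)
    also have "\<dots> = emeasure lborel (psi3 -` S \<inter> space lborel)" by (rule emeasure_distr) (use Sb in auto)
    finally show ?thesis by (simp add: T_def)
  qed
  have VT: "V = measure lborel T"
    using VS ST Sb by (simp add: measure_def)
  define f where "f p = indicator S p * (1 / sqrt (p $ 3))" for p :: "real^3"
  have fm[measurable]: "f \<in> borel_measurable borel"
  proof -
    have "(\<lambda>p::real^3. p $ 3) \<in> borel_measurable borel"
      by (intro borel_measurable_continuous_onI linear_continuous_on bounded_linear_vec_nth)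
    then show ?thesis unfolding f_def[abs_def] using Sb by measurable
  qed
  have f0: "0 \<le> f p" for p using posS by (auto simp: f_def indicator_def)
  have INT: "(\<integral>\<^sup>+p. ennreal (f p) \<partial>lborel) = (\<integral>\<^sup>+q. indicator T q * ennreal (1 / sqrt (fst q)) \<partial>lborel)"
  proof -
    have "(\<integral>\<^sup>+p. ennreal (f p) \<partial>lborel) = (\<integral>\<^sup>+p. ennreal (f p) \<partial>(distr lborel borel psi3))"
      by (simp add: distr_psi3)
    also have "\<dots> = (\<integral>\<^sup>+q. ennreal (f (psi3 q)) \<partial>lborel)"
      by (rule nn_integral_distr) auto
    also have "\<dots> = (\<integral>\<^sup>+q. indicator T q * ennreal (1 / sqrt (fst q)) \<partial>lborel)"
      by (intro nn_integral_cong) (auto simp: f_def T_def indicator_def)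
    finally show ?thesis .
  qed
  note b = core[OF cT vT symT posT hc]
  have up: "(\<integral>\<^sup>+p. ennreal (f p) \<partial>lborel) \<le> ennreal (sqrt 2 * V / sqrt (C $ 3))"
    using b(1) INT VT fstc by simp
  have lo: "ennreal (V / sqrt (C $ 3)) \<le> (\<integral>\<^sup>+p. ennreal (f p) \<partial>lborel)"
    using b(2) INT VT fstc by simp
  obtain r where r: "(\<integral>\<^sup>+p. ennreal (f p) \<partial>lborel) = ennreal r" "0 \<le> r"
    using up by (cases "(\<integral>\<^sup>+p. ennreal (f p) \<partial>lborel)" rule: ennreal_cases) (auto simp: top_unique)
  have hi: "(f has_integral r) UNIV"
    by (rule nn_integral_has_integral[OF fm f0 r])
  have "f = (\<lambda>x. if x \<in> S then 1 / sqrt (x $ 3) else 0)"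
    by (auto simp: f_def indicator_def fun_eq_iff)
  then have "integral S (\<lambda>p. 1 / sqrt (p $ 3)) = integral UNIV f"
    by (simp only: integral_restrict_UNIV)
  also have "\<dots> = r" using hi by (rule integral_unique)
  finally have dt: "drainage_time K S = r / K" unfolding drainage_time_def by simp
  have V0: "0 \<le> V" using assms(4) by simp
  have r1: "V / sqrt (C $ 3) \<le> r" using lo r by (simp add: ennreal_le_iff)
  have r2: "r \<le> sqrt 2 * V / sqrt (C $ 3)"
    using up r V0 hC by (simp add: ennreal_le_iff)
  have "V / (K * sqrt (C $ 3)) = (V / sqrt (C $ 3)) / K" by simp
  also have "\<dots> \<le> r / K" using r1 K0 by (intro divide_right_mono) auto
  finally have g1: "V / (K * sqrt (C $ 3)) \<le> drainage_time K S" using dt by simp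
  have "r / K \<le> (sqrt 2 * V / sqrt (C $ 3)) / K" using r2 K0 by (intro divide_right_mono) auto
  also have "\<dots> = sqrt 2 * V / (K * sqrt (C $ 3))" by (simp add: field_simps)
  finally have g2: "drainage_time K S \<le> sqrt 2 * V / (K * sqrt (C $ 3))" using dt by simp
  show ?thesis using g1 g2 by simp
qed

end
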